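(* Let $b$ and $c$ be integers with $b > c > 1$, let $m = 2b+c$, and let $f(x) = x^{2b+c} + x^{b+c} + x^{b} + x^{c} + 1 \in \mathbb{F}_2[x]$. There is a fixed, input-independent straight-line program using no AND operations and exactly $6b+3c-2 = 3m-2$ two-input XOR operations, of XOR depth $3$ (i.e. time delay $3T_X$), which, on input the coefficient bits $d_0,\dots,d_{2m-2}$ of an arbitrary polynomial $D(x)=\sum_{i=0}^{2m-2} d_i x^i \in \mathbb{F}_2[x]$ of degree at most $2m-2$, outputs the $m$ coefficient bits of the remainder of $D$ upon division by $f$ (the unique polynomial of degree less than $m$ congruent to $D$ modulo $f$).
   Context: A straight-line program (bit-parallel circuit) over $\mathbb{F}_2$ here is a sequence of gates, each computing the XOR (sum in $\mathbb{F}_2$) of two values that are either input bits or outputs of earlier gates; each output bit is an input bit or a gate output. The number of XOR operations is the number of gates. $T_X$ denotes the delay of one 2-input XOR gate, and the time delay of the program is $T_X$ times the maximum number of gates on any path from an input to an output. *)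

theory Defs
  imports "HOL-Library.Z2" "HOL-Computational_Algebra.Polynomial"
begin

(* A straight-line XOR program on n input bits is a list of gates; gate k is a pair (i,j)
   of wire indices, where wires 0..n-1 are the inputs and wire n+k is the output of gate k.
   Gate k computes wire i XOR wire j (addition in F_2 = type bit). *)
type_synonym gate = "nat \<times> nat"

definition slp_wf :: "nat \<Rightarrow> gate list \<Rightarrow> nat list \<Rightarrow> bool" where
  "slp_wf n gs outs \<longleftrightarrow>
     (\<forall>k < length gs. fst (gs ! k) < n + k \<and> snd (gs ! k) < n + k) \<and>
     (\<forall>w \<in> set outs. w < n + length gs)"

definition slp_wires :: "nat \<Rightarrow> (nat \<Rightarrow> bit) \<Rightarrow> gate list \<Rightarrow> bit list" where
  "slp_wires n x gs =
     foldl (\<lambda>vs g. vs @ [vs ! fst g + vs ! snd g]) (map x [0..<n]) gs"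

definition slp_depths :: "nat \<Rightarrow> gate list \<Rightarrow> nat list" where
  "slp_depths n gs =
     foldl (\<lambda>ds g. ds @ [Suc (max (ds ! fst g) (ds ! snd g))]) (replicate n 0) gs"

definition slp_depth :: "nat \<Rightarrow> gate list \<Rightarrow> nat list \<Rightarrow> nat" where
  "slp_depth n gs outs = Max (set (map (\<lambda>w. slp_depths n gs ! w) outs))"

definition slp_outputs :: "nat \<Rightarrow> (nat \<Rightarrow> bit) \<Rightarrow> gate list \<Rightarrow> nat list \<Rightarrow> bit list" where
  "slp_outputs n x gs outs = map (\<lambda>w. slp_wires n x gs ! w) outs"

definition pentanomial :: "nat \<Rightarrow> nat \<Rightarrow> bit poly" where
  "pentanomial b c = monom 1 (2*b+c) + monom 1 (b+c) + monom 1 b + monom 1 c + 1"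

end

theory Submission
  imports Defs
begin


definition ext :: "('a \<Rightarrow> 'a \<Rightarrow> 'a) \<Rightarrow> 'a list \<Rightarrow> gate list \<Rightarrow> 'a list" where
  "ext op init gs = foldl (\<lambda>vs g. vs @ [op (vs ! fst g) (vs ! snd g)]) init gs"

lemma ext_Nil[simp]: "ext op init [] = init"
  by (simp add: ext_def)

lemma ext_snoc: "ext op init (gs @ [g]) = ext op init gs @ [op (ext op init gs ! fst g) (ext op init gs ! snd g)]"
  by (simp add: ext_def)

lemma ext_len[simp]: "length (ext op init gs) = length init + length gs"
  by (induct gs rule: rev_induct) (simp_all add: ext_snoc)

lemma ext_prefix: "w < length init + length gs \<Longrightarrow> ext op init (gs @ gs') ! w = ext op init gs ! w"
proof (induct gs' rule: rev_induct)
  case Nil then show ?case by simp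
next
  case (snoc g gs')
  then show ?case
    by (simp only: append_assoc[symmetric] ext_snoc nth_append ext_len length_append) simp
qed

lemma ext_init: "w < length init \<Longrightarrow> ext op init gs ! w = init ! w"
  using ext_prefix[of w init "[]" op gs] by simp

lemma ext_gate:
  assumes k: "k < length gs" and f: "fst (gs!k) < length init + k" and s: "snd (gs!k) < length init + k"
  shows "ext op init gs ! (length init + k) = op (ext op init gs ! fst (gs!k)) (ext op init gs ! snd (gs!k))"
proof -
  have lt: "length (take k gs) = k" using k by simp
  have e1: "gs = (take k gs @ [gs!k]) @ drop (Suc k) gs"
    using k by (simp add: id_take_nth_drop[symmetric])
  have e2: "gs = take k gs @ drop k gs" by simp
  have A: "ext op init gs ! (length init + k) = ext op init (take k gs @ [gs!k]) ! (length init + k)"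
    by (subst e1, rule ext_prefix) (use lt in simp)
  have B: "ext op init gs ! i = ext op init (take k gs) ! i" if "i < length init + k" for i
    by (subst e2, rule ext_prefix) (use lt that in simp)
  show ?thesis
    unfolding A ext_snoc using B[OF f] B[OF s] lt by (simp add: nth_append)
qed

lemma wires_ext: "slp_wires n x gs = ext (+) (map x [0..<n]) gs"
  by (simp add: slp_wires_def ext_def)
lemma depths_ext: "slp_depths n gs = ext (\<lambda>a b. Suc (max a b)) (replicate n 0) gs"
  by (simp add: slp_depths_def ext_def)

lemma wires_input: "w < n \<Longrightarrow> slp_wires n x gs ! w = x w"
  by (simp add: wires_ext ext_init)
lemma depths_input: "w < n \<Longrightarrow> slp_depths n gs ! w = 0"
  by (simp add: depths_ext ext_init)

lemma wires_gate: "k < length gs \<Longrightarrow> fst (gs!k) < n + k \<Longrightarrow> snd (gs!k) < n + k \<Longrightarrow>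
   slp_wires n x gs ! (n + k) = slp_wires n x gs ! fst (gs!k) + slp_wires n x gs ! snd (gs!k)"
  unfolding wires_ext using ext_gate[of k gs "map x [0..<n]" "(+)"] by simp
lemma depths_gate: "k < length gs \<Longrightarrow> fst (gs!k) < n + k \<Longrightarrow> snd (gs!k) < n + k \<Longrightarrow>
   slp_depths n gs ! (n + k) = Suc (max (slp_depths n gs ! fst (gs!k)) (slp_depths n gs ! snd (gs!k)))"
  unfolding depths_ext using ext_gate[of k gs "replicate n 0" "\<lambda>a b. Suc (max a b)"] by simp

lemma concat_len: "(\<And>i. length (f i) = L) \<Longrightarrow> length (concat (map f [0..<N])) = L * N"
  by (induct N) simp_all

lemma concat_nth:
  assumes "\<And>i. length (f i) = L" "i < N" "r < L"
  shows "concat (map f [0..<N]) ! (L*i + r) = f i ! r"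
  using assms(2)
proof (induct N)
  case 0 then show ?case by simp
next
  case (Suc N)
  have len: "length (concat (map f [0..<N])) = L * N"
    using assms(1) by (rule concat_len)
  show ?case
  proof (cases "i < N")
    case True
    have "L*i + r < L*(Suc i)" using assms(3) by simp
    also have "L*Suc i \<le> L*N" by (rule mult_le_mono2) (use True in simp)
    finally have "L*i + r < L*N" .
    then show ?thesis using Suc True len by (simp add: nth_append)
  next
    case False
    then have "i = N" using Suc by simp
    then show ?thesis using len by (simp add: nth_append)
  qed
qed




context
  fixes b c :: nat
  assumes bc: "c < b" "1 < c"
begin

abbreviation "mm \<equiv> 2*b+c"
abbreviation "nn \<equiv> 2*(2*b+c) - 1"

definition "Kw y = (if y < b-1 then nn + y else mm + y)"

definition "items3 k = (if k < b then [k, mm+(k-c), mm+(k+b-c), Kw k]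
   else if k < b+c then [k, mm+(k-c), mm+(k+b-c), Kw (k-b)]
   else [k, mm+(k+b-c), Kw (k-b), Kw (k-b-c)])"

definition "items2 k = (if k < c then [k, mm+(k+b), Kw k] else [k, Kw (k-b), Kw (k-b-c)])"

definition blk3 :: "nat \<Rightarrow> nat list \<Rightarrow> gate list" where
  "blk3 w L = [(L!0, L!1), (L!2, L!3), (w, w+1)]"
definition blk2 :: "nat \<Rightarrow> nat list \<Rightarrow> gate list" where
  "blk2 w L = [(L!0, L!1), (w, L!2)]"

definition "G1 = map (\<lambda>y. (mm+y, mm+y+b+c)) [0..<b-1]"
definition "G3 = concat (map (\<lambda>i. blk3 (nn + (b-1) + 3*i) (items3 (c+i))) [0..<b+c-1])"
definition "k2 i = (if i < c then i else i+b+c-1)"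
definition "G2 = concat (map (\<lambda>i. blk2 (nn + (b-1) + 3*(b+c-1) + 2*i) (items2 (k2 i))) [0..<b+1])"
definition "GS = G1 @ G3 @ G2"
definition "outk k = (if c \<le> k \<and> k < b+2*c-1 then nn + (b-1) + 3*(k-c) + 2
   else nn + (b-1) + 3*(b+c-1) + 2*(if k < c then k else k-(b+c-1)) + 1)"
definition "OUTS = map outk [0..<mm]"

lemma len_G1: "length G1 = b-1" by (simp add: G1_def)
lemma len_G3: "length G3 = 3*(b+c-1)" unfolding G3_def by (rule concat_len) (simp add: blk3_def)
lemma len_G2: "length G2 = 2*(b+1)" unfolding G2_def by (rule concat_len) (simp add: blk2_def)
lemma len_GS: "length GS = 3*mm - 2"
  using bc by (simp add: GS_def len_G1 len_G2 len_G3)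

lemma GS_1: "y < b-1 \<Longrightarrow> GS ! y = (mm+y, mm+y+b+c)"
  by (simp add: GS_def nth_append len_G1 G1_def)

lemma GS_3: "i < b+c-1 \<Longrightarrow> r < 3 \<Longrightarrow> GS ! (b-1 + (3*i+r)) = blk3 (nn + (b-1) + 3*i) (items3 (c+i)) ! r"
proof -
  assume a: "i < b+c-1" "r < 3"
  have "3*i + r < 3*(b+c-1)" using a by linarith
  then have "GS ! (b-1 + (3*i+r)) = G3 ! (3*i+r)"
    by (simp add: GS_def nth_append len_G1 len_G3)
  also have "\<dots> = blk3 (nn + (b-1) + 3*i) (items3 (c+i)) ! r"
    unfolding G3_def by (rule concat_nth) (use a in \<open>simp_all add: blk3_def\<close>)
  finally show ?thesis .
qed

lemma GS_2: "i < b+1 \<Longrightarrow> r < 2 \<Longrightarrow> GS ! (b-1 + 3*(b+c-1) + (2*i+r)) = blk2 (nn + (b-1) + 3*(b+c-1) + 2*i) (items2 (k2 i)) ! r"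
proof -
  assume a: "i < b+1" "r < 2"
  have "GS ! (b-1 + 3*(b+c-1) + (2*i+r)) = G2 ! (2*i+r)"
    by (simp add: GS_def nth_append len_G1 len_G3)
  also have "\<dots> = blk2 (nn + (b-1) + 3*(b+c-1) + 2*i) (items2 (k2 i)) ! r"
    unfolding G2_def by (rule concat_nth) (use a in \<open>simp_all add: blk2_def\<close>)
  finally show ?thesis .
qed

lemma Kw_lt: "y \<le> mm - 2 \<Longrightarrow> Kw y < nn + (b-1)"
  using bc by (auto simp: Kw_def)

lemma items3_lt: "c \<le> k \<Longrightarrow> k < b+2*c-1 \<Longrightarrow> j < 4 \<Longrightarrow> items3 k ! j < nn + (b-1)"
  using bc by (auto simp: items3_def Kw_def less_Suc_eq numeral_eq_Suc)

lemma items2_lt: "k < mm \<Longrightarrow> \<not> (c \<le> k \<and> k < b+2*c-1) \<Longrightarrow> j < 3 \<Longrightarrow> items2 k ! j < nn + (b-1)"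
  using bc by (auto simp: items2_def Kw_def less_Suc_eq numeral_eq_Suc)

lemma k2_range: "i < b+1 \<Longrightarrow> k2 i < mm \<and> \<not> (c \<le> k2 i \<and> k2 i < b+2*c-1)"
  using bc by (auto simp: k2_def)

lemma GS_wf: "g < length GS \<Longrightarrow> fst (GS!g) < nn + g \<and> snd (GS!g) < nn + g"
proof -
  assume g: "g < length GS"
  consider "g < b-1" | "b-1 \<le> g" "g < b-1 + 3*(b+c-1)" | "b-1 + 3*(b+c-1) \<le> g"
    by linarith
  then show ?thesis
  proof cases
    case 1 then show ?thesis using bc by (simp add: GS_1) arith
  next
    case 2
    define i where "i = (g - (b-1)) div 3"
    define r where "r = (g - (b-1)) mod 3"
    have gi: "g = b-1 + (3*i+r)" using 2 unfolding i_def r_def by simp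
    have ir: "i < b+c-1" "r < 3" using 2 unfolding i_def r_def by auto
    have L: "\<And>j. j < 4 \<Longrightarrow> items3 (c+i) ! j < nn + (b-1)"
      by (rule items3_lt) (use ir in auto)
    show ?thesis
      unfolding gi GS_3[OF ir] using ir L[of 0] L[of 1] L[of 2] L[of 3]
      by (auto simp: blk3_def less_Suc_eq numeral_eq_Suc; arith)
  next
    case 3
    define i where "i = (g - (b-1) - 3*(b+c-1)) div 2"
    define r where "r = (g - (b-1) - 3*(b+c-1)) mod 2"
    have gi: "g = b-1 + 3*(b+c-1) + (2*i+r)" using 3 unfolding i_def r_def by simp
    have ir: "i < b+1" "r < 2" using 3 g len_GS bc unfolding i_def r_def by auto
    have L: "\<And>j. j < 3 \<Longrightarrow> items2 (k2 i) ! j < nn + (b-1)"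
      by (rule items2_lt) (use k2_range[OF ir(1)] in auto)
    show ?thesis
      unfolding gi GS_2[OF ir] using ir L[of 0] L[of 1] L[of 2]
      by (auto simp: blk2_def less_Suc_eq numeral_eq_Suc; arith)
  qed
qed

end

declare add_bit_eq_xor[simp del] mult_bit_eq_and[simp del]

lemma bit_add_self[simp]: "(x::bit) + x = 0"
  by (cases x) (simp_all add: add_bit_eq_xor)
lemma bit_add_self_left[simp]: "(x::bit) + (x + y) = y"
  by (simp add: add.assoc[symmetric])

context
  fixes b c :: nat and d :: "nat \<Rightarrow> bit"
  assumes bc: "c < b" "1 < c"
begin

definition "dd i = (if i < 2*(2*b+c) - 1 then d i else 0)"
definition "hh y = dd (2*b+c+y)"
definition "Qc t = hh t + hh (t+b) + hh (t+b+c)"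
definition "rowval k = dd k +
   (if k < c then hh (k+b) + hh k + hh (k+b+c)
    else if k < b then hh (k-c) + hh (k+b-c) + hh k + hh (k+b+c)
    else if k < b+c then hh (k-c) + hh (k+b-c) + hh (k-b) + hh (k+c)
    else hh (k+b-c) + hh (k-b) + hh (k+c) + hh (k-b-c) + hh k)"

lemma hh0: "2*b+c \<le> Suc y \<Longrightarrow> hh y = 0"
  unfolding hh_def dd_def by simp

lemma key: "dd n = Qc n + (if n < b+c then 0 else Qc (n-(b+c))) + (if n<b then 0 else Qc(n-b))
   + (if n<c then 0 else Qc(n-c)) + (if n<2*b+c then 0 else Qc(n-(2*b+c)))
   + (if n<2*b+c then rowval n else 0)"
proof -
  consider "n < c" | "c \<le> n" "n < b" | "b \<le> n" "n < b+c" | "b+c \<le> n" "n < 2*b+c" | "2*b+c \<le> n"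
    by linarith
  then show ?thesis
  proof cases
    case 1
    then show ?thesis using bc by (simp add: Qc_def rowval_def hh0 add_ac)
  next
    case 2
    then obtain t where t: "n = c + t" using le_Suc_ex by blast
    show ?thesis using bc 2 unfolding t by (simp add: Qc_def rowval_def hh0 add_ac)
  next
    case 3
    then obtain t where t: "n = b + t" using le_Suc_ex by blast
    show ?thesis using bc 3 unfolding t by (simp add: Qc_def rowval_def hh0 add_ac)
  next
    case 4
    then obtain t where t: "n = b + c + t" using le_Suc_ex by blast
    show ?thesis using bc 4 unfolding t by (simp add: Qc_def rowval_def hh0 add_ac)
  next
    case 5
    then obtain t where t: "n = 2*b + c + t" using le_Suc_ex by blast
    show ?thesis using bc 5 unfolding t by (simp add: Qc_def rowval_def hh0 add_ac mult_2) (simp add: hh_def add_ac mult_2)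
  qed
qed

lemma coeff_D: "coeff (\<Sum>i<2*(2*b+c) - 1. monom (d i) i) n = dd n"
  by (simp add: coeff_sum coeff_monom dd_def)

definition "QQ = (\<Sum>t<2*b+c. monom (Qc t) t)"
definition "RR = (\<Sum>t<2*b+c. monom (rowval t) t)"

lemma coeff_QQ: "coeff QQ n = Qc n"
  using bc by (simp add: QQ_def coeff_sum coeff_monom Qc_def hh0)

lemma coeff_RR: "coeff RR n = (if n < 2*b+c then rowval n else 0)"
  by (simp add: RR_def coeff_sum coeff_monom)

lemma coeff_f: "coeff (pentanomial b c) n = (if n = 2*b+c then 1 else 0) + (if n = b+c then 1 else 0)
   + (if n = b then 1 else 0) + (if n = c then 1 else 0) + (if n = 0 then 1 else 0)"
  by (auto simp add: pentanomial_def coeff_monom coeff_1)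

lemma degree_f: "degree (pentanomial b c) = 2*b+c"
proof (rule antisym)
  show "degree (pentanomial b c) \<le> 2*b+c"
    by (rule degree_le) (use bc in \<open>auto simp: coeff_f\<close>)
  show "2*b+c \<le> degree (pentanomial b c)"
    by (rule le_degree) (use bc in \<open>simp add: coeff_f\<close>)
qed

lemma degree_RR: "degree RR < 2*b+c"
proof -
  have "degree RR \<le> 2*b+c-1"
    by (rule degree_le) (use bc in \<open>auto simp: coeff_RR\<close>)
  then show ?thesis using bc by linarith
qed

lemma D_eq: "(\<Sum>i<2*(2*b+c) - 1. monom (d i) i) = QQ * pentanomial b c + RR"
proof (rule poly_eqI)
  fix n
  have "coeff (QQ * pentanomial b c) n = Qc n + (if n < b+c then 0 else Qc (n-(b+c))) + (if n<b then 0 else Qc(n-b))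
   + (if n<c then 0 else Qc(n-c)) + (if n<2*b+c then 0 else Qc(n-(2*b+c)))"
    by (simp add: pentanomial_def distrib_left mult.commute[of QQ] coeff_monom_mult coeff_QQ add_ac)
  then show "coeff (\<Sum>i<2*(2*b+c) - 1. monom (d i) i) n = coeff (QQ * pentanomial b c + RR) n"
    by (simp only: coeff_D coeff_add coeff_RR key)
qed

lemma rem_coeff: "k < 2*b+c \<Longrightarrow> coeff ((\<Sum>i<2*(2*b+c) - 1. monom (d i) i) mod pentanomial b c) k = rowval k"
proof -
  have "(\<Sum>i<2*(2*b+c) - 1. monom (d i) i) mod pentanomial b c = RR"
    unfolding D_eq using degree_RR degree_f
    by (simp add: mod_poly_less)
  then show "k < 2*b+c \<Longrightarrow> ?thesis" by (simp add: coeff_RR)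
qed

end


context
  fixes b c :: nat
  assumes bc: "c < b" "1 < c"
begin

lemmas outk_eq = outk_def[OF bc] and items3_eq = items3_def[OF bc] and items2_eq = items2_def[OF bc]
  and Kw_eq = Kw_def[OF bc] and blk3_eq = blk3_def[OF bc] and blk2_eq = blk2_def[OF bc] and k2_eq = k2_def[OF bc]

lemma GSwf: "g < length (GS b c) \<Longrightarrow> fst (GS b c ! g) < nn b c + g \<and> snd (GS b c ! g) < nn b c + g"
  using GS_wf[OF bc] by blast

lemma W_gate: "g < length (GS b c) \<Longrightarrow> slp_wires (nn b c) x (GS b c) ! (nn b c + g)
   = slp_wires (nn b c) x (GS b c) ! fst (GS b c ! g) + slp_wires (nn b c) x (GS b c) ! snd (GS b c ! g)"
  using GSwf by (intro wires_gate) auto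

lemma D_gate: "g < length (GS b c) \<Longrightarrow> slp_depths (nn b c) (GS b c) ! (nn b c + g)
   = Suc (max (slp_depths (nn b c) (GS b c) ! fst (GS b c ! g)) (slp_depths (nn b c) (GS b c) ! snd (GS b c ! g)))"
  using GSwf by (intro depths_gate) auto

lemma W_Kw: "y \<le> mm b c - 2 \<Longrightarrow> slp_wires (nn b c) x (GS b c) ! Kw b c y =
   (if y < b-1 then x (mm b c + y) + x (mm b c + y + b + c) else x (mm b c + y))"
proof (cases "y < b-1")
  case True
  have g: "y < length (GS b c)" using True len_GS[OF bc] by simp
  show ?thesis using True W_gate[OF g] GS_1[OF bc True] bc
    by (simp add: Kw_eq wires_input)
next
  case False
  assume "y \<le> mm b c - 2"
  then show ?thesis using False bc by (simp add: Kw_eq wires_input)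
qed

lemma D_Kw: "y \<le> mm b c - 2 \<Longrightarrow> slp_depths (nn b c) (GS b c) ! Kw b c y = (if y < b-1 then 1 else 0)"
proof (cases "y < b-1")
  case True
  have g: "y < length (GS b c)" using True len_GS[OF bc] by simp
  show ?thesis using True D_gate[OF g] GS_1[OF bc True] bc
    by (simp add: Kw_eq depths_input)
next
  case False
  assume "y \<le> mm b c - 2"
  then show ?thesis using False bc by (simp add: Kw_eq depths_input)
qed

lemma blk3_nth: "blk3 w L ! 0 = (L!0, L!1)" "blk3 w L ! 1 = (L!2, L!3)" "blk3 w L ! 2 = (w, w+1)"
  by (simp_all add: blk3_eq)
lemma blk2_nth: "blk2 w L ! 0 = (L!0, L!1)" "blk2 w L ! 1 = (w, L!2)"
  by (simp_all add: blk2_eq)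

lemma out3:
  assumes k: "c \<le> k" "k < b+2*c-1"
  defines "L \<equiv> items3 b c k"
  shows "slp_wires (nn b c) x (GS b c) ! outk b c k =
      (slp_wires (nn b c) x (GS b c) ! (L!0) + slp_wires (nn b c) x (GS b c) ! (L!1))
    + (slp_wires (nn b c) x (GS b c) ! (L!2) + slp_wires (nn b c) x (GS b c) ! (L!3))"
    and "slp_depths (nn b c) (GS b c) ! outk b c k =
      Suc (max (Suc (max (slp_depths (nn b c) (GS b c) ! (L!0)) (slp_depths (nn b c) (GS b c) ! (L!1))))
               (Suc (max (slp_depths (nn b c) (GS b c) ! (L!2)) (slp_depths (nn b c) (GS b c) ! (L!3)))))"
proof -
  define i where "i = k - c"
  define w where "w = nn b c + (b-1) + 3*i"
  have i: "i < b+c-1" using k unfolding i_def by linarith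
  have ki: "c + i = k" using k unfolding i_def by simp
  have o: "outk b c k = nn b c + (b-1 + (3*i+2))" using k bc unfolding outk_eq i_def by simp
  have w0: "w = nn b c + (b-1 + (3*i+0))" unfolding w_def by simp
  have w1: "w + 1 = nn b c + (b-1 + (3*i+1))" unfolding w_def by simp
  have lt: "b-1 + (3*i+r) < length (GS b c)" if "r < 3" for r
    using i that len_GS[OF bc] by simp
  have g: "GS b c ! (b-1 + (3*i+r)) = blk3 w L ! r" if "r < 3" for r
    using GS_3[OF bc i that] ki unfolding L_def w_def by simp
  have lt0: "b-1 + (3*i+0) < length (GS b c)" by (rule lt) simp
  have lt1: "b-1 + (3*i+1) < length (GS b c)" by (rule lt) simp
  have lt2: "b-1 + (3*i+2) < length (GS b c)" by (rule lt) simp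
  have g0: "GS b c ! (b-1 + (3*i+0)) = (L!0, L!1)" using g[of 0] blk3_nth(1) by simp
  have g1: "GS b c ! (b-1 + (3*i+1)) = (L!2, L!3)" using g[of 1] blk3_nth(2) by simp
  have g2: "GS b c ! (b-1 + (3*i+2)) = (w, w+1)" using g[of 2] blk3_nth(3) by simp
  show "slp_wires (nn b c) x (GS b c) ! outk b c k =
      (slp_wires (nn b c) x (GS b c) ! (L!0) + slp_wires (nn b c) x (GS b c) ! (L!1))
    + (slp_wires (nn b c) x (GS b c) ! (L!2) + slp_wires (nn b c) x (GS b c) ! (L!3))"
  proof -
    have e1: "slp_wires (nn b c) x (GS b c) ! (w+1) = slp_wires (nn b c) x (GS b c) ! (L!2) + slp_wires (nn b c) x (GS b c) ! (L!3)"
      by (simp only: w1 W_gate[OF lt1] g1 fst_conv snd_conv)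
    have e0: "slp_wires (nn b c) x (GS b c) ! w = slp_wires (nn b c) x (GS b c) ! (L!0) + slp_wires (nn b c) x (GS b c) ! (L!1)"
      by (simp only: w0 W_gate[OF lt0] g0 fst_conv snd_conv)
    show ?thesis by (simp only: o W_gate[OF lt2] g2 fst_conv snd_conv e0 e1)
  qed
  show "slp_depths (nn b c) (GS b c) ! outk b c k =
      Suc (max (Suc (max (slp_depths (nn b c) (GS b c) ! (L!0)) (slp_depths (nn b c) (GS b c) ! (L!1))))
               (Suc (max (slp_depths (nn b c) (GS b c) ! (L!2)) (slp_depths (nn b c) (GS b c) ! (L!3)))))"
  proof -
    have e1: "slp_depths (nn b c) (GS b c) ! (w+1) = Suc (max (slp_depths (nn b c) (GS b c) ! (L!2)) (slp_depths (nn b c) (GS b c) ! (L!3)))"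
      by (simp only: w1 D_gate[OF lt1] g1 fst_conv snd_conv)
    have e0: "slp_depths (nn b c) (GS b c) ! w = Suc (max (slp_depths (nn b c) (GS b c) ! (L!0)) (slp_depths (nn b c) (GS b c) ! (L!1)))"
      by (simp only: w0 D_gate[OF lt0] g0 fst_conv snd_conv)
    show ?thesis by (simp only: o D_gate[OF lt2] g2 fst_conv snd_conv e0 e1)
  qed
qed

lemma out2:
  assumes k: "k < mm b c" "\<not> (c \<le> k \<and> k < b+2*c-1)"
  defines "L \<equiv> items2 b c k"
  shows "slp_wires (nn b c) x (GS b c) ! outk b c k =
      (slp_wires (nn b c) x (GS b c) ! (L!0) + slp_wires (nn b c) x (GS b c) ! (L!1))
    + slp_wires (nn b c) x (GS b c) ! (L!2)"
    and "slp_depths (nn b c) (GS b c) ! outk b c k =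
      Suc (max (Suc (max (slp_depths (nn b c) (GS b c) ! (L!0)) (slp_depths (nn b c) (GS b c) ! (L!1))))
               (slp_depths (nn b c) (GS b c) ! (L!2)))"
proof -
  define i where "i = (if k < c then k else k-(b+c-1))"
  define w where "w = nn b c + (b-1) + 3*(b+c-1) + 2*i"
  have i: "i < b+1" using k bc unfolding i_def by auto
  have ki: "k2 b c i = k" using k bc unfolding i_def k2_eq by auto
  have o: "outk b c k = nn b c + (b-1 + 3*(b+c-1) + (2*i+1))" using k bc unfolding outk_eq i_def
    by (cases "k < c"; simp; arith)
  have w0: "w = nn b c + (b-1 + 3*(b+c-1) + (2*i+0))" unfolding w_def by simp
  have lt: "b-1 + 3*(b+c-1) + (2*i+r) < length (GS b c)" if "r < 2" for r
    using i that len_GS[OF bc] bc by (simp; linarith)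
  have g: "GS b c ! (b-1 + 3*(b+c-1) + (2*i+r)) = blk2 w L ! r" if "r < 2" for r
    using GS_2[OF bc i that] ki unfolding L_def w_def by simp
  have lt0: "b-1 + 3*(b+c-1) + (2*i+0) < length (GS b c)" by (rule lt) simp
  have lt1: "b-1 + 3*(b+c-1) + (2*i+1) < length (GS b c)" by (rule lt) simp
  have g0: "GS b c ! (b-1 + 3*(b+c-1) + (2*i+0)) = (L!0, L!1)" using g[of 0] blk2_nth(1) by simp
  have g1: "GS b c ! (b-1 + 3*(b+c-1) + (2*i+1)) = (w, L!2)" using g[of 1] blk2_nth(2) by simp
  show "slp_wires (nn b c) x (GS b c) ! outk b c k =
      (slp_wires (nn b c) x (GS b c) ! (L!0) + slp_wires (nn b c) x (GS b c) ! (L!1))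
    + slp_wires (nn b c) x (GS b c) ! (L!2)"
    unfolding o W_gate[OF lt1] g1 fst_conv snd_conv
    by (simp only: w0 W_gate[OF lt0] g0 fst_conv snd_conv)
  show "slp_depths (nn b c) (GS b c) ! outk b c k =
      Suc (max (Suc (max (slp_depths (nn b c) (GS b c) ! (L!0)) (slp_depths (nn b c) (GS b c) ! (L!1))))
               (slp_depths (nn b c) (GS b c) ! (L!2)))"
    unfolding o D_gate[OF lt1] g1 fst_conv snd_conv
    by (simp only: w0 D_gate[OF lt0] g0 fst_conv snd_conv)
qed


lemmas T2defs = rowval_def[OF bc] hh_def[OF bc] dd_def[OF bc]

lemma Win: "w < nn b c \<Longrightarrow> slp_wires (nn b c) x (GS b c) ! w = x w"
  by (rule wires_input)

lemma W_h: "y + 2 \<le> mm b c \<Longrightarrow> slp_wires (nn b c) x (GS b c) ! (mm b c + y) = hh b c x y"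
proof -
  assume y: "y + 2 \<le> mm b c"
  have lt: "mm b c + y < nn b c" using y by arith
  show ?thesis by (simp only: Win[OF lt] hh_def[OF bc] dd_def[OF bc] if_P[OF lt])
qed

lemma W_d: "k < mm b c \<Longrightarrow> slp_wires (nn b c) x (GS b c) ! k = dd b c x k"
proof -
  assume y: "k < mm b c"
  have lt: "k < nn b c" using y by arith
  show ?thesis by (simp only: Win[OF lt] dd_def[OF bc] if_P[OF lt])
qed

lemma W_K: "y + 2 \<le> mm b c \<Longrightarrow> slp_wires (nn b c) x (GS b c) ! (Kw b c y) = hh b c x y + hh b c x (y+b+c)"
proof -
  assume y: "y + 2 \<le> mm b c"
  have lt: "mm b c + y < nn b c" using y by arith
  show ?thesis
  proof (cases "y < b-1")
    case True
    have lt2: "mm b c + y + b + c < nn b c" using True by arith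
    have lt3: "mm b c + (y + b + c) < nn b c" using True by arith
    have "slp_wires (nn b c) x (GS b c) ! (Kw b c y) = x (mm b c + y) + x (mm b c + y + b + c)"
      using W_Kw[of y x] y True by (simp add: le_diff_conv2)
    also have "\<dots> = hh b c x y + hh b c x (y+b+c)"
    proof -
      have "x (mm b c + y + b + c) = x (mm b c + (y + b + c))" by (simp add: add.assoc)
      then show ?thesis by (simp only: hh_def[OF bc] dd_def[OF bc] if_P[OF lt] if_P[OF lt3])
    qed
    finally show ?thesis .
  next
    case False
    have z: "hh b c x (y+b+c) = 0" by (rule hh0[OF bc]) (use False in arith)
    have "slp_wires (nn b c) x (GS b c) ! (Kw b c y) = x (mm b c + y)"
      using W_Kw[of y x] y False by (simp add: le_diff_conv2)
    also have "\<dots> = hh b c x y + hh b c x (y+b+c)"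
      unfolding z by (simp only: hh_def[OF bc] dd_def[OF bc] if_P[OF lt] add_0_right)
    finally show ?thesis .
  qed
qed

lemma val: assumes k: "k < mm b c"
  shows "slp_wires (nn b c) x (GS b c) ! outk b c k = rowval b c x k"
proof -
  consider "k < c" | "c \<le> k" "k < b" | "b \<le> k" "k < b+c" | "b+c \<le> k" "k < b+2*c-1" | "b+2*c-1 \<le> k"
    by arith
  then show ?thesis
  proof cases
    case 1
    have n: "\<not> (c \<le> k \<and> k < b+2*c-1)" using 1 by simp
    have L: "items2 b c k = [k, mm b c + (k+b), Kw b c k]" using 1 by (simp add: items2_eq)
    have Ls: "items2 b c k ! 0 = k" "items2 b c k ! 1 = mm b c + (k+b)" "items2 b c k ! 2 = Kw b c k" using L by simp_all
    have e: "slp_wires (nn b c) x (GS b c) ! (mm b c + (k+b)) = hh b c x (k+b)"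
      "slp_wires (nn b c) x (GS b c) ! (Kw b c k) = hh b c x k + hh b c x (k+b+c)"
      "slp_wires (nn b c) x (GS b c) ! k = dd b c x k"
      by (rule W_h W_K W_d; use 1 bc in arith)+
    show ?thesis using 1 unfolding out2(1)[OF k n, of x] Ls rowval_def[OF bc]
      by (simp only: e) (simp add: add_ac)
  next
    case 2
    have n: "k < b+2*c-1" using 2 bc by arith
    have L: "items3 b c k = [k, mm b c + (k-c), mm b c + (k+b-c), Kw b c k]" using 2 by (simp add: items3_eq)
    have Ls: "items3 b c k ! 0 = k" "items3 b c k ! 1 = mm b c + (k-c)" "items3 b c k ! 2 = mm b c + (k+b-c)" "items3 b c k ! 3 = Kw b c k" using L by simp_all
    have e: "slp_wires (nn b c) x (GS b c) ! (mm b c + (k-c)) = hh b c x (k-c)"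
      "slp_wires (nn b c) x (GS b c) ! (mm b c + (k+b-c)) = hh b c x (k+b-c)"
      "slp_wires (nn b c) x (GS b c) ! (Kw b c k) = hh b c x k + hh b c x (k+b+c)"
      "slp_wires (nn b c) x (GS b c) ! k = dd b c x k"
      by (rule W_h W_K W_d; use 2 bc in arith)+
    show ?thesis using 2 bc unfolding out3(1)[OF 2(1) n, of x] Ls rowval_def[OF bc]
      by (simp only: e) (simp add: add_ac)
  next
    case 3
    have n: "k < b+2*c-1" "c \<le> k" using 3 bc by arith+
    have L: "items3 b c k = [k, mm b c + (k-c), mm b c + (k+b-c), Kw b c (k-b)]" using 3 by (simp add: items3_eq)
    have Ls: "items3 b c k ! 0 = k" "items3 b c k ! 1 = mm b c + (k-c)" "items3 b c k ! 2 = mm b c + (k+b-c)" "items3 b c k ! 3 = Kw b c (k-b)" using L by simp_all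
    have e: "slp_wires (nn b c) x (GS b c) ! (mm b c + (k-c)) = hh b c x (k-c)"
      "slp_wires (nn b c) x (GS b c) ! (mm b c + (k+b-c)) = hh b c x (k+b-c)"
      "slp_wires (nn b c) x (GS b c) ! (Kw b c (k-b)) = hh b c x (k-b) + hh b c x (k-b+b+c)"
      "slp_wires (nn b c) x (GS b c) ! k = dd b c x k"
      by (rule W_h W_K W_d; use 3 bc in arith)+
    have e2: "k-b+b+c = k+c" using 3 by simp
    show ?thesis using 3 bc unfolding out3(1)[OF n(2) n(1), of x] Ls rowval_def[OF bc]
      by (simp only: e e2) (simp add: add_ac)
  next
    case 4
    have n: "c \<le> k" using 4 by arith
    have L: "items3 b c k = [k, mm b c + (k+b-c), Kw b c (k-b), Kw b c (k-b-c)]" using 4 bc by (simp add: items3_eq)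
    have Ls: "items3 b c k ! 0 = k" "items3 b c k ! 1 = mm b c + (k+b-c)" "items3 b c k ! 2 = Kw b c (k-b)" "items3 b c k ! 3 = Kw b c (k-b-c)" using L by simp_all
    have e: "slp_wires (nn b c) x (GS b c) ! (mm b c + (k+b-c)) = hh b c x (k+b-c)"
      "slp_wires (nn b c) x (GS b c) ! (Kw b c (k-b)) = hh b c x (k-b) + hh b c x (k-b+b+c)"
      "slp_wires (nn b c) x (GS b c) ! (Kw b c (k-b-c)) = hh b c x (k-b-c) + hh b c x (k-b-c+b+c)"
      "slp_wires (nn b c) x (GS b c) ! k = dd b c x k"
      by (rule W_h W_K W_d; use 4 bc in arith)+
    have e2: "k-b+b+c = k+c" "k-b-c+b+c = k" using 4 by simp_all
    show ?thesis using 4 bc unfolding out3(1)[OF n 4(2), of x] Ls rowval_def[OF bc]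
      by (simp only: e e2) (simp add: add_ac)
  next
    case 5
    have n: "\<not> (c \<le> k \<and> k < b+2*c-1)" using 5 by simp
    have nc: "\<not> k < c" "\<not> k < b" "\<not> k < b+c" using 5 bc by arith+
    have L: "items2 b c k = [k, Kw b c (k-b), Kw b c (k-b-c)]" using nc(1) by (simp add: items2_eq)
    have Ls: "items2 b c k ! 0 = k" "items2 b c k ! 1 = Kw b c (k-b)" "items2 b c k ! 2 = Kw b c (k-b-c)" using L by simp_all
    have e: "slp_wires (nn b c) x (GS b c) ! (Kw b c (k-b)) = hh b c x (k-b) + hh b c x (k-b+b+c)"
      "slp_wires (nn b c) x (GS b c) ! (Kw b c (k-b-c)) = hh b c x (k-b-c) + hh b c x (k-b-c+b+c)"
      "slp_wires (nn b c) x (GS b c) ! k = dd b c x k"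
      by (rule W_h W_K W_d; use 5 bc k in arith)+
    have e2: "k-b+b+c = k+c" "k-b-c+b+c = k" using 5 bc by simp_all
    have z: "hh b c x (k+b-c) = 0" by (rule hh0[OF bc]) (use 5 bc in arith)
    show ?thesis using 5 bc nc unfolding out2(1)[OF k n, of x] Ls rowval_def[OF bc]
      by (simp only: e e2 z) (simp add: add_ac)
  qed
qed


lemma D_low: "w < nn b c + (b-1) \<Longrightarrow> slp_depths (nn b c) (GS b c) ! w \<le> 1"
proof (cases "w < nn b c")
  case True then show ?thesis by (simp add: depths_input)
next
  case False
  assume w: "w < nn b c + (b-1)"
  define g where "g = w - nn b c"
  have wg: "w = nn b c + g" and g: "g < b-1" using False w unfolding g_def by auto
  have gl: "g < length (GS b c)" using g len_GS[OF bc] by simp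
  have "mm b c + g < nn b c" "mm b c + g + b + c < nn b c" using g bc by arith+
  then show ?thesis unfolding wg D_gate[OF gl] GS_1[OF bc g] by (simp add: depths_input)
qed

lemma depth_le: assumes k: "k < mm b c" shows "slp_depths (nn b c) (GS b c) ! outk b c k \<le> 3"
proof (cases "c \<le> k \<and> k < b+2*c-1")
  case True
  have "\<And>j. j < 4 \<Longrightarrow> slp_depths (nn b c) (GS b c) ! (items3 b c k ! j) \<le> 1"
    by (rule D_low, rule items3_lt[OF bc]) (use True in auto)
  from this[of 0] this[of 1] this[of 2] this[of 3] show ?thesis
    unfolding out3(2)[OF conjunct1[OF True] conjunct2[OF True]] by simp
next
  case False
  have "\<And>j. j < 3 \<Longrightarrow> slp_depths (nn b c) (GS b c) ! (items2 b c k ! j) \<le> 1"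
    by (rule D_low, rule items2_lt[OF bc]) (use False k in auto)
  from this[of 0] this[of 1] this[of 2] show ?thesis
    unfolding out2(2)[OF k False] by simp
qed

lemma depth_b: "slp_depths (nn b c) (GS b c) ! outk b c b = 3"
proof -
  have L: "items3 b c b ! 3 = Kw b c 0" using bc by (simp add: items3_eq)
  have b1: "0 < b - 1" using bc by arith
  have d1: "slp_depths (nn b c) (GS b c) ! Kw b c 0 = 1" using D_Kw[of 0] b1 by simp
  have le: "slp_depths (nn b c) (GS b c) ! outk b c b \<le> 3" by (rule depth_le) (use bc in simp)
  have "3 \<le> slp_depths (nn b c) (GS b c) ! outk b c b"
  proof -
    have p: "c \<le> b" "b < b+2*c-1" using bc by arith+
    show ?thesis unfolding out3(2)[OF p] L d1 by simp
  qed
  with le show ?thesis by simp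
qed

lemma outs_lt: "k < mm b c \<Longrightarrow> outk b c k < nn b c + length (GS b c)"
  unfolding outk_eq len_GS[OF bc] using bc by (simp split: if_split; arith)

end

theorem theorem2:
  fixes b c :: nat
  assumes "b > c" and "c > 1"
  defines "m \<equiv> 2*b + c"
  shows "\<exists>gs outs.
           slp_wf (2*m - 1) gs outs \<and>
           length outs = m \<and>
           length gs = 3*m - 2 \<and>
           slp_depth (2*m - 1) gs outs = 3 \<and>
           (\<forall>d :: nat \<Rightarrow> bit.
              \<forall>k < m. slp_outputs (2*m - 1) d gs outs ! k =
                       coeff ((\<Sum>i<2*m - 1. monom (d i) i) mod pentanomial b c) k)"
proof (intro exI conjI allI impI)
  have bc: "c < b" "1 < c" using assms by auto
  have o: "w < (2*m-1) + length (GS b c)" if "w \<in> set (OUTS b c)" for w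
  proof -
    from that obtain k where k: "k < 2*b+c" "w = outk b c k" unfolding OUTS_def[OF bc] by auto
    show ?thesis unfolding k(2) m_def by (rule outs_lt[OF bc k(1)])
  qed
  have g: "fst (GS b c ! k) < (2*m-1) + k \<and> snd (GS b c ! k) < (2*m-1) + k" if "k < length (GS b c)" for k
    unfolding m_def by (rule GS_wf[OF bc that])
  show "slp_wf (2*m - 1) (GS b c) (OUTS b c)"
    unfolding slp_wf_def using o g by blast
  show "length (OUTS b c) = m" by (simp add: OUTS_def[OF bc] m_def)
  show "length (GS b c) = 3*m - 2" by (simp add: len_GS[OF bc] m_def)
  show "slp_depth (2*m - 1) (GS b c) (OUTS b c) = 3"
    unfolding slp_depth_def m_def
  proof (rule Max_eqI)
    show "finite (set (map ((!) (slp_depths (2 * (2 * b + c) - 1) (GS b c))) (OUTS b c)))" by simp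
    show "y \<le> 3" if "y \<in> set (map ((!) (slp_depths (2 * (2 * b + c) - 1) (GS b c))) (OUTS b c))" for y
      using that depth_le[OF bc] by (auto simp: OUTS_def[OF bc])
    show "3 \<in> set (map ((!) (slp_depths (2 * (2 * b + c) - 1) (GS b c))) (OUTS b c))"
      using depth_b[OF bc] bc unfolding OUTS_def[OF bc] by (auto intro!: image_eqI[of _ _ b])
  qed
  fix d :: "nat \<Rightarrow> bit" and k assume k: "k < m"
  show "slp_outputs (2*m - 1) d (GS b c) (OUTS b c) ! k =
      coeff ((\<Sum>i<2*m - 1. monom (d i) i) mod pentanomial b c) k"
  proof -
    have k': "k < 2*b+c" using k m_def by simp
    have "slp_outputs (2*m - 1) d (GS b c) (OUTS b c) ! k = slp_wires (2*(2*b+c)-1) d (GS b c) ! outk b c k"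
      using k' unfolding m_def slp_outputs_def OUTS_def[OF bc] by simp
    also have "\<dots> = rowval b c d k" by (rule val[OF bc k'])
    also have "\<dots> = coeff ((\<Sum>i<2*m - 1. monom (d i) i) mod pentanomial b c) k"
      unfolding m_def by (rule rem_coeff[OF bc k', symmetric])
    finally show ?thesis .
  qed
qed


end
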